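(* Let $N\ge1$, $\alpha>0$, and let $u_0\in L^1(\mathbb{R}^N)\cap L^2(\mathbb{R}^N)$ satisfy $\int_{\mathbb{R}^N}u_0(x)\,dx>0$. Let $u$ be the solution of $$\frac{\partial u}{\partial t}+(-\Delta)^\alpha u=0 \text{ on }(0,\infty)\times\mathbb{R}^N,\qquad u(0,x)=u_0(x),$$ i.e. $u(t,x)=(2\pi)^{-N/2}\int_{\mathbb{R}^N}e^{-t|\omega|^{2\alpha}}\widehat{u}_0(\omega)e^{i\omega\cdot x}\,d\omega$. Then for every compact set $K\subseteq\mathbb{R}^N$ there exists $T\ge0$, depending on $u_0$ and $K$, such that $u(t,x)>0$ for all $(t,x)\in[T,\infty)\times K$.
   Context: The Fourier transform is $\widehat{u}_0(\omega)=(2\pi)^{-N/2}\int_{\mathbb{R}^N}u_0(x)e^{-i\omega\cdot x}\,dx$; $(-\Delta)^\alpha$ is the operator with Fourier symbol $|\omega|^{2\alpha}$. *)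

theory Defs
  imports "HOL-Analysis.Analysis"
begin

definition fourier :: "('a::euclidean_space \<Rightarrow> real) \<Rightarrow> 'a \<Rightarrow> complex" where
  "fourier u0 \<omega> =
     complex_of_real ((2 * pi) powr (- real DIM('a) / 2)) *
     (\<integral>x. complex_of_real (u0 x) * exp (- \<i> * complex_of_real (\<omega> \<bullet> x)) \<partial>lborel)"

definition frac_heat_sol :: "real \<Rightarrow> ('a::euclidean_space \<Rightarrow> real) \<Rightarrow> real \<Rightarrow> 'a \<Rightarrow> complex" where
  "frac_heat_sol \<alpha> u0 t x =
     complex_of_real ((2 * pi) powr (- real DIM('a) / 2)) *
     (\<integral>\<omega>. complex_of_real (exp (- t * norm \<omega> powr (2 * \<alpha>))) * fourier u0 \<omega>
            * exp (\<i> * complex_of_real (\<omega> \<bullet> x)) \<partial>lborel)"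

end

theory Submission
  imports Defs "HOL-Probability.Sinc_Integral"
begin



lemma exp_ge_pow_fact: "(y::real) \<ge> 0 \<Longrightarrow> y ^ k / fact k \<le> exp y"
proof -
  assume y: "y \<ge> 0"
  have s: "summable (\<lambda>n. y ^ n /\<^sub>R fact n)" by (rule summable_exp_generic)
  have "(\<Sum>n\<in>{k}. y ^ n /\<^sub>R fact n) \<le> (\<Sum>n. y ^ n /\<^sub>R fact n)"
    by (rule sum_le_suminf[OF s]) (use y in auto)
  then show ?thesis by (simp add: exp_def divide_inverse mult.commute)
qed

lemma exp_powr_bound:
  fixes s \<alpha> :: real
  assumes s: "s > 0" and a: "\<alpha> > 0"
  shows "\<exists>C>0. \<forall>r::real. exp (- s * \<bar>r\<bar> powr (2 * \<alpha>)) \<le> C * inverse (1 + r\<^sup>2)"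
proof -
  define k where "k = nat \<lceil>1 / \<alpha>\<rceil>"
  have k1: "real k \<ge> 1 / \<alpha>" unfolding k_def by linarith
  then have k2: "2 * \<alpha> * real k \<ge> 2" using a by (simp add: field_simps)
  define C where "C = 2 * max 1 (fact k / s ^ k)"
  have Cpos: "C > 0" unfolding C_def by auto
  have "exp (- s * \<bar>r\<bar> powr (2 * \<alpha>)) \<le> C * inverse (1 + r\<^sup>2)" for r :: real
  proof (cases "\<bar>r\<bar> \<ge> 1")
    case True
    define y where "y = s * \<bar>r\<bar> powr (2 * \<alpha>)"
    have ypos: "y > 0" using True s unfolding y_def by auto
    have rp: "\<bar>r\<bar> powr (2 * \<alpha>) > 0" using True by auto
    have "(\<bar>r\<bar> powr (2 * \<alpha>)) ^ k = (\<bar>r\<bar> powr (2 * \<alpha>)) powr (real k)"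
      using rp by (rule powr_realpow[symmetric])
    also have "\<dots> = \<bar>r\<bar> powr (2 * \<alpha> * real k)" by (rule powr_powr)
    finally have "y ^ k = s ^ k * \<bar>r\<bar> powr (2 * \<alpha> * real k)"
      unfolding y_def by (simp only: power_mult_distrib)
    also have "\<bar>r\<bar> powr (2 * \<alpha> * real k) \<ge> \<bar>r\<bar> powr 2"
      using True k2 by (intro powr_mono) auto
    then have "s ^ k * \<bar>r\<bar> powr (2 * \<alpha> * real k) \<ge> s ^ k * r\<^sup>2"
      using s True by (metis abs_ge_zero dual_order.trans mult_le_cancel_left_pos powr_numeral power2_abs zero_less_one zero_less_power)
    finally have yk: "y ^ k \<ge> s ^ k * r\<^sup>2" .
    have "exp (- y) = inverse (exp y)" by (simp add: exp_minus)
    also have "\<dots> \<le> inverse (y ^ k / fact k)"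
      using exp_ge_pow_fact[of y k] ypos by (intro le_imp_inverse_le) auto
    also have "\<dots> = fact k / y ^ k" by simp
    also have "\<dots> \<le> fact k / (s ^ k * r\<^sup>2)"
      using yk s True ypos by (intro divide_left_mono) auto
    also have "\<dots> \<le> C * inverse (1 + r\<^sup>2)"
    proof -
      have "1 \<le> \<bar>r\<bar>^2" using True by (intro one_le_power) auto
      then have r2: "1 + r\<^sup>2 \<le> 2 * r\<^sup>2" by (simp only: power2_abs)
      have "fact k / (s ^ k * r\<^sup>2) = (fact k / s ^ k) / r\<^sup>2" by simp
      also have "\<dots> \<le> (fact k / s ^ k) * 2 / (1 + r\<^sup>2)"
      proof -
        have rp: "r\<^sup>2 > 0" using True by auto
        have "1 / r\<^sup>2 \<le> 2 / (1 + r\<^sup>2)" using r2 rp by (simp add: divide_simps)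
        then have "(fact k / s ^ k) * (1 / r\<^sup>2) \<le> (fact k / s ^ k) * (2 / (1 + r\<^sup>2))"
          using s by (intro mult_left_mono) auto
        then show ?thesis by simp
      qed
      also have "\<dots> \<le> C / (1 + r\<^sup>2)"
      proof (intro divide_right_mono)
        have "\<And>a::real. a * 2 \<le> 2 * max 1 a" by linarith
        then show "fact k / s ^ k * 2 \<le> C" unfolding C_def by blast
      qed auto
      finally show ?thesis by (simp add: divide_inverse)
    qed
    finally show ?thesis unfolding y_def by simp
  next
    case False
    have "exp (- s * \<bar>r\<bar> powr (2 * \<alpha>)) \<le> 1" using s by auto
    also have "1 \<le> 2 * inverse (1 + r\<^sup>2)"
    proof -
      have "\<bar>r\<bar>^2 \<le> 1" using False by (intro power_le_one) auto
      then have "r\<^sup>2 \<le> 1" by (simp only: power2_abs)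
      moreover have "1 + r\<^sup>2 > 0" by (simp add: add_pos_nonneg)
      ultimately show ?thesis by (simp add: inverse_eq_divide le_divide_eq)
    qed
    also have "\<dots> \<le> C * inverse (1 + r\<^sup>2)" unfolding C_def
      by (intro mult_right_mono) auto
    finally show ?thesis .
  qed
  then show ?thesis using Cpos by blast
qed

lemma nn_1d_finite:
  fixes s \<alpha> :: real
  assumes s: "s > 0" and a: "\<alpha> > 0"
  shows "(\<integral>\<^sup>+r. ennreal (exp (- s * \<bar>r\<bar> powr (2 * \<alpha>))) \<partial>lborel) < \<infinity>"
proof -
  obtain C where C: "C > 0" "\<And>r::real. exp (- s * \<bar>r\<bar> powr (2 * \<alpha>)) \<le> C * inverse (1 + r\<^sup>2)"
    using exp_powr_bound[OF s a] by blast
  have int: "integrable lborel (\<lambda>r::real. C * inverse (1 + r\<^sup>2))"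
    using integrable_inverse_1_plus_square unfolding set_integrable_def einterval_eq_UNIV
    by (intro integrable_mult_right) simp
  have "(\<integral>\<^sup>+r. ennreal (exp (- s * \<bar>r\<bar> powr (2 * \<alpha>))) \<partial>lborel)
        \<le> (\<integral>\<^sup>+r. ennreal (C * inverse (1 + r\<^sup>2)) \<partial>lborel)"
    using C by (intro nn_integral_mono) (simp add: ennreal_leI)
  also have "\<dots> = ennreal (\<integral>r. C * inverse (1 + r\<^sup>2) \<partial>lborel)"
    using int C by (intro nn_integral_eq_integral) (auto simp: add_pos_nonneg)
  also have "\<dots> < \<infinity>" by simp
  finally show ?thesis .
qed

lemma integrable_exp_norm_powr:
  fixes t \<alpha> :: real
  assumes t: "t > 0" and a: "\<alpha> > 0"
  shows "integrable lborel (\<lambda>\<omega>::'a::euclidean_space. exp (- t * norm \<omega> powr (2 * \<alpha>)))"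
proof (rule integrableI_bounded)
  show "(\<lambda>\<omega>::'a. exp (- t * norm \<omega> powr (2 * \<alpha>))) \<in> borel_measurable lborel" by measurable
  define s where "s = t / real DIM('a)"
  have s: "s > 0" unfolding s_def using t by auto
  have pw: "exp (- t * norm \<omega> powr (2 * \<alpha>)) \<le> (\<Prod>b\<in>Basis. exp (- s * \<bar>\<omega> \<bullet> b\<bar> powr (2 * \<alpha>)))"
    for \<omega> :: 'a
  proof -
    have "(\<Sum>b\<in>(Basis::'a set). s * \<bar>\<omega> \<bullet> b\<bar> powr (2 * \<alpha>)) \<le> (\<Sum>b\<in>(Basis::'a set). s * norm \<omega> powr (2 * \<alpha>))"
      using s a by (intro sum_mono mult_left_mono powr_mono2 Basis_le_norm) auto
    also have "\<dots> = t * norm \<omega> powr (2 * \<alpha>)" unfolding s_def by simp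
    finally have "- t * norm \<omega> powr (2 * \<alpha>) \<le> (\<Sum>b\<in>(Basis::'a set). - s * \<bar>\<omega> \<bullet> b\<bar> powr (2 * \<alpha>))"
      by (simp add: sum_negf)
    then show ?thesis by (simp add: exp_sum[symmetric])
  qed
  have "(\<integral>\<^sup>+\<omega>. ennreal (norm (exp (- t * norm (\<omega>::'a) powr (2 * \<alpha>)))) \<partial>lborel)
     \<le> (\<integral>\<^sup>+\<omega>. (\<Prod>b\<in>Basis. ennreal (exp (- s * \<bar>(\<omega>::'a) \<bullet> b\<bar> powr (2 * \<alpha>)))) \<partial>lborel)"
    using pw by (intro nn_integral_mono) (simp add: prod_ennreal ennreal_leI)
  also have "\<dots> = (\<Prod>b\<in>(Basis::'a set). (\<integral>\<^sup>+r. ennreal (exp (- s * \<bar>r\<bar> powr (2 * \<alpha>))) \<partial>lborel))"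
    by (rule nn_integral_lborel_prod[where f="\<lambda>b r. ennreal (exp (- s * \<bar>r\<bar> powr (2 * \<alpha>)))"]) auto
  also have "\<dots> < \<infinity>"
    using nn_1d_finite[OF s a] by (simp add: power_less_top_ennreal)
  finally show "(\<integral>\<^sup>+\<omega>. ennreal (norm (exp (- t * norm (\<omega>::'a) powr (2 * \<alpha>)))) \<partial>lborel) < \<infinity>" .
qed
lemma lborel_uminus_eq: "distr lborel borel uminus = (lborel :: 'a::euclidean_space measure)"
proof -
  have "(lborel :: 'a measure) = density (distr lborel borel (\<lambda>x. 0 + (-1::real) *\<^sub>R x)) (\<lambda>_. \<bar>-1::real\<bar> ^ DIM('a))"
    by (rule lborel_affine) simp
  also have "\<dots> = distr lborel borel uminus"
    by (simp add: density_1)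
  finally show ?thesis by simp
qed

lemma integral_reflect:
  fixes f :: "'a::euclidean_space \<Rightarrow> 'b::{banach, second_countable_topology}"
  assumes "f \<in> borel_measurable borel"
  shows "(\<integral>x. f (- x) \<partial>lborel) = (\<integral>x. f x \<partial>lborel)"
proof -
  have "(\<integral>x. f x \<partial>lborel) = (\<integral>x. f x \<partial>(distr lborel borel uminus))"
    by (simp add: lborel_uminus_eq)
  also have "\<dots> = (\<integral>x. f (- x) \<partial>lborel)"
    using assms by (intro integral_distr) auto
  finally show ?thesis by simp
qed

lemma continuous_param_integral:
  fixes f :: "'b::metric_space \<Rightarrow> 'x \<Rightarrow> 'c::{banach, second_countable_topology}"
  assumes g: "integrable M g" and bnd: "\<And>w x. norm (f w x) \<le> g x"
    and meas: "\<And>w. f w \<in> borel_measurable M"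
    and cont: "\<And>x. continuous_on UNIV (\<lambda>w. f w x)"
  shows "continuous_on UNIV (\<lambda>w. \<integral>x. f w x \<partial>M)"
  unfolding continuous_on_eq_continuous_at[OF open_UNIV]
proof (intro ballI continuous_at_sequentiallyI)
  fix a :: 'b and u :: "nat \<Rightarrow> 'b" assume u: "u \<longlonglongrightarrow> a"
  show "(\<lambda>n. \<integral>x. f (u n) x \<partial>M) \<longlonglongrightarrow> (\<integral>x. f a x \<partial>M)"
  proof (rule integral_dominated_convergence[where w=g])
    show "AE x in M. (\<lambda>n. f (u n) x) \<longlonglongrightarrow> f a x"
    proof (intro AE_I2)
      fix x
      have "isCont (\<lambda>w. f w x) a" using cont[of x] by (simp add: continuous_on_eq_continuous_at)
      then show "(\<lambda>n. f (u n) x) \<longlonglongrightarrow> f a x" using u by (rule isCont_tendsto_compose)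
    qed
  qed (use g bnd meas in auto)
qed


lemma fourier_integrand_norm:
  "norm (complex_of_real (u0 x) * exp (- \<i> * complex_of_real (\<omega> \<bullet> x))) = \<bar>u0 x\<bar>"
  by (simp add: norm_mult norm_exp_eq_Re)

lemma fourier_cont:
  fixes u0 :: "'a::euclidean_space \<Rightarrow> real"
  assumes u0: "integrable lborel u0"
  shows "continuous_on UNIV (fourier u0)"
proof -
  have m: "u0 \<in> borel_measurable lborel" using u0 by auto
  have "continuous_on UNIV (\<lambda>\<omega>::'a. \<integral>x. complex_of_real (u0 x) * exp (- \<i> * complex_of_real (\<omega> \<bullet> x)) \<partial>lborel)"
  proof (rule continuous_param_integral[where g="\<lambda>x. \<bar>u0 x\<bar>"])
    show "integrable lborel (\<lambda>x. \<bar>u0 x\<bar>)" using u0 by (rule integrable_abs)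
    show "norm (complex_of_real (u0 x) * exp (- \<i> * complex_of_real (w \<bullet> x))) \<le> \<bar>u0 x\<bar>" for w x
      by (simp only: fourier_integrand_norm)
    show "(\<lambda>x. complex_of_real (u0 x) * exp (- \<i> * complex_of_real (w \<bullet> x))) \<in> borel_measurable lborel" for w
      using m by measurable
    show "continuous_on UNIV (\<lambda>w::'a. complex_of_real (u0 x) * exp (- \<i> * complex_of_real (w \<bullet> x)))" for x
      by (intro continuous_intros)
  qed
  then show ?thesis unfolding fourier_def[abs_def] by (intro continuous_intros)
qed

lemma fourier_meas:
  fixes u0 :: "'a::euclidean_space \<Rightarrow> real"
  assumes u0: "integrable lborel u0"
  shows "fourier u0 \<in> borel_measurable borel"
  using fourier_cont[OF u0] by (rule borel_measurable_continuous_onI)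

lemma fourier_bound:
  fixes u0 :: "'a::euclidean_space \<Rightarrow> real"
  shows "norm (fourier u0 \<omega>) \<le> (2 * pi) powr (- real DIM('a) / 2) * (\<integral>x. \<bar>u0 x\<bar> \<partial>lborel)"
proof -
  have "norm (\<integral>x. complex_of_real (u0 x) * exp (- \<i> * complex_of_real (\<omega> \<bullet> x)) \<partial>lborel)
      \<le> (\<integral>x. norm (complex_of_real (u0 x) * exp (- \<i> * complex_of_real (\<omega> \<bullet> x))) \<partial>lborel)"
    by (rule integral_norm_bound)
  also have "\<dots> = (\<integral>x. \<bar>u0 x\<bar> \<partial>lborel)" by (simp only: fourier_integrand_norm)
  finally have I: "norm (\<integral>x. complex_of_real (u0 x) * exp (- \<i> * complex_of_real (\<omega> \<bullet> x)) \<partial>lborel) \<le> (\<integral>x. \<bar>u0 x\<bar> \<partial>lborel)" .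
  have c: "norm (complex_of_real ((2 * pi) powr (- real DIM('a) / 2))) = (2 * pi) powr (- real DIM('a) / 2)"
    unfolding norm_of_real by (rule abs_of_nonneg) (rule powr_ge_zero)
  have "norm (fourier u0 \<omega>) = (2 * pi) powr (- real DIM('a) / 2) * norm (\<integral>x. complex_of_real (u0 x) * exp (- \<i> * complex_of_real (\<omega> \<bullet> x)) \<partial>lborel)"
    unfolding fourier_def norm_mult c ..
  also have "\<dots> \<le> (2 * pi) powr (- real DIM('a) / 2) * (\<integral>x. \<bar>u0 x\<bar> \<partial>lborel)"
    using I by (rule mult_left_mono) (rule powr_ge_zero)
  finally show ?thesis .
qed

lemma fourier_zero:
  fixes u0 :: "'a::euclidean_space \<Rightarrow> real"
  shows "fourier u0 0 = complex_of_real ((2 * pi) powr (- real DIM('a) / 2) * (\<integral>x. u0 x \<partial>lborel))"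
  unfolding fourier_def by (simp add: integral_complex_of_real)

lemma fourier_uminus:
  fixes u0 :: "'a::euclidean_space \<Rightarrow> real"
  shows "fourier u0 (- \<omega>) = cnj (fourier u0 \<omega>)"
proof -
  have e: "(\<lambda>x. complex_of_real (u0 x) * exp (- \<i> * complex_of_real ((- \<omega>) \<bullet> x)))
     = (\<lambda>x. cnj (complex_of_real (u0 x) * exp (- \<i> * complex_of_real (\<omega> \<bullet> x))))"
  proof (rule ext)
    fix x
    have a: "cnj (- \<i> * complex_of_real (\<omega> \<bullet> x)) = - \<i> * complex_of_real ((- \<omega>) \<bullet> x)"
      by (simp add: inner_minus_left)
    have b: "cnj (complex_of_real (u0 x) * exp (- \<i> * complex_of_real (\<omega> \<bullet> x))) = complex_of_real (u0 x) * exp (cnj (- \<i> * complex_of_real (\<omega> \<bullet> x)))"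
      by (simp only: complex_cnj_mult complex_cnj_complex_of_real exp_cnj)
    show "complex_of_real (u0 x) * exp (- \<i> * complex_of_real ((- \<omega>) \<bullet> x)) = cnj (complex_of_real (u0 x) * exp (- \<i> * complex_of_real (\<omega> \<bullet> x)))"
      unfolding b a ..
  qed
  have i: "(\<integral>x. cnj (g x) \<partial>lborel) = cnj (\<integral>x. g x \<partial>lborel)" for g :: "'a \<Rightarrow> complex"
    by simp
  show ?thesis unfolding fourier_def e i by (simp only: complex_cnj_mult complex_cnj_complex_of_real)
qed



theorem theorem2p1:
  fixes u0 :: "'a::euclidean_space \<Rightarrow> real" and \<alpha> :: real
  assumes "\<alpha> > 0"
    and "integrable lborel u0"
    and "integrable lborel (\<lambda>x. (u0 x)\<^sup>2)"
    and "(\<integral>x. u0 x \<partial>lborel) > 0"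
  shows "\<forall>K::'a set. compact K \<longrightarrow>
           (\<exists>T\<ge>0. \<forall>t\<ge>T. \<forall>x\<in>K.
              Im (frac_heat_sol \<alpha> u0 t x) = 0 \<and> Re (frac_heat_sol \<alpha> u0 t x) > 0)"
proof (intro allI impI)
  note a = assms(1) and u0 = assms(2) and Ipos = assms(4)
  fix K :: "'a set" assume "compact K"
  then obtain R where R: "R > 0" "\<And>x. x \<in> K \<Longrightarrow> norm x \<le> R"
    using compact_imp_bounded bounded_pos by metis
  define c0 where "c0 = (2 * pi) powr (- real DIM('a) / 2)"
  have c0: "c0 > 0" unfolding c0_def by simp
  define F where "F = fourier u0"
  define A where "A = c0 * (\<integral>x. u0 x \<partial>lborel)"
  have A: "A > 0" unfolding A_def using c0 Ipos by simp
  define M where "M = c0 * (\<integral>x. \<bar>u0 x\<bar> \<partial>lborel)"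
  have Fb: "norm (F \<omega>) \<le> M" for \<omega> unfolding F_def M_def c0_def by (rule fourier_bound)
  have M: "M \<ge> 0" using Fb[of 0] norm_ge_zero order_trans by blast
  have F0: "F 0 = complex_of_real A" unfolding F_def A_def c0_def by (rule fourier_zero)
  have Fc: "continuous_on UNIV F" unfolding F_def using u0 by (rule fourier_cont)
  have Fm[measurable]: "F \<in> borel_measurable borel" unfolding F_def using u0 by (rule fourier_meas)
  have Fu: "F (- \<omega>) = cnj (F \<omega>)" for \<omega> unfolding F_def by (rule fourier_uminus)
  obtain \<delta>1 where d1: "\<delta>1 > 0" "\<And>\<omega>. norm \<omega> < \<delta>1 \<Longrightarrow> norm (F \<omega> - F 0) < A / 4"
  proof -
    from Fc have "\<exists>d>0. \<forall>x'\<in>UNIV. dist x' 0 < d \<longrightarrow> dist (F x') (F 0) < A / 4"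
      unfolding continuous_on_iff using A by (meson UNIV_I divide_pos_pos zero_less_numeral)
    then show ?thesis using that by (auto simp: dist_norm)
  qed
  define \<delta> where "\<delta> = min (\<delta>1 / 2) (1 / (4 * R))"
  have \<delta>: "\<delta> > 0" "\<delta> < \<delta>1" "\<delta> * R \<le> 1 / 4"
    unfolding \<delta>_def using d1 R by (auto simp: min_def field_simps)
  have near: "Re (F \<omega> * exp (\<i> * complex_of_real (\<omega> \<bullet> x))) \<ge> A / 2"
    if w: "norm \<omega> \<le> \<delta>" and x: "norm x \<le> R" for \<omega> x
  proof -
    define E where "E = exp (\<i> * complex_of_real (\<omega> \<bullet> x))"
    have nE: "norm E = 1" unfolding E_def by simp
    have "norm (E - 1) = 2 * \<bar>sin ((\<omega> \<bullet> x) / 2)\<bar>" unfolding E_def by (rule dist_exp_i_1)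
    also have "\<dots> \<le> 2 * \<bar>(\<omega> \<bullet> x) / 2\<bar>" using abs_sin_x_le_abs_x[of "(\<omega> \<bullet> x) / 2"] by simp
    also have "\<dots> = \<bar>\<omega> \<bullet> x\<bar>" by simp
    also have "\<dots> \<le> norm \<omega> * norm x" by (rule Cauchy_Schwarz_ineq2)
    also have "\<dots> \<le> \<delta> * R" using w x \<delta> by (intro mult_mono) auto
    also have "\<dots> \<le> 1 / 4" using \<delta> by simp
    finally have E1: "norm (E - 1) \<le> 1 / 4" .
    have FA: "norm (F \<omega> - complex_of_real A) \<le> A / 4"
      using d1(2)[of \<omega>] w \<delta> F0 by auto
    have "F \<omega> * E - complex_of_real A = (F \<omega> - complex_of_real A) * E + complex_of_real A * (E - 1)"
      by (simp add: algebra_simps)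
    then have "norm (F \<omega> * E - complex_of_real A) \<le> norm (F \<omega> - complex_of_real A) * norm E + A * norm (E - 1)"
      using A by (metis norm_triangle_ineq norm_mult norm_of_real abs_of_pos)
    also have "\<dots> \<le> A / 4 + A * (1 / 4)"
      using FA E1 nE A by (intro add_mono mult_left_mono) auto
    finally have n: "norm (F \<omega> * E - complex_of_real A) \<le> A / 2" by simp
    have "Re (F \<omega> * E) = A + Re (F \<omega> * E - complex_of_real A)" by simp
    also have "\<dots> \<ge> A - norm (F \<omega> * E - complex_of_real A)"
      using abs_Re_le_cmod[of "F \<omega> * E - complex_of_real A"] by linarith
    finally show ?thesis using n unfolding E_def by linarith
  qed
  have far: "Re (F \<omega> * exp (\<i> * complex_of_real (\<omega> \<bullet> x))) \<ge> - M" for \<omega> x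
  proof -
    have "norm (F \<omega> * exp (\<i> * complex_of_real (\<omega> \<bullet> x))) \<le> M" using Fb[of \<omega>] by (simp add: norm_mult)
    then show ?thesis using abs_Re_le_cmod[of "F \<omega> * exp (\<i> * complex_of_real (\<omega> \<bullet> x))"] by linarith
  qed
  define e where "e t \<omega> = exp (- t * norm (\<omega>::'a) powr (2 * \<alpha>))" for t \<omega>
  define h where "h t x \<omega> = complex_of_real (e t \<omega>) * F \<omega> * exp (\<i> * complex_of_real (\<omega> \<bullet> x))" for t x \<omega>
  have sol: "frac_heat_sol \<alpha> u0 t x = complex_of_real c0 * (\<integral>\<omega>. h t x \<omega> \<partial>lborel)" for t x
    unfolding frac_heat_sol_def h_def e_def c0_def F_def ..
  have hm[measurable]: "h t x \<in> borel_measurable borel" for t x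
    unfolding h_def e_def by measurable
  have eint: "integrable lborel (e t)" if "t > 0" for t
    unfolding e_def[abs_def] using that a by (rule integrable_exp_norm_powr)
  have hint: "integrable lborel (h t x)" if "t > 0" for t x
  proof (rule Bochner_Integration.integrable_bound[where f="\<lambda>\<omega>. M * e t \<omega>"])
    show "integrable lborel (\<lambda>\<omega>. M * e t \<omega>)" using eint[OF that] by simp
    show "h t x \<in> borel_measurable lborel" using hm by simp
    show "AE \<omega> in lborel. norm (h t x \<omega>) \<le> norm (M * e t \<omega>)"
    proof (intro AE_I2)
      fix \<omega>
      have "norm (h t x \<omega>) = e t \<omega> * norm (F \<omega>)" unfolding h_def e_def by (simp add: norm_mult)
      also have "\<dots> \<le> e t \<omega> * M" using Fb[of \<omega>] unfolding e_def by (intro mult_left_mono) auto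
      also have "\<dots> = norm (M * e t \<omega>)" using M unfolding e_def by simp
      finally show "norm (h t x \<omega>) \<le> norm (M * e t \<omega>)" .
    qed
  qed
  have him: "Im (\<integral>\<omega>. h t x \<omega> \<partial>lborel) = 0" for t x
  proof -
    have "h t x (- \<omega>) = cnj (h t x \<omega>)" for \<omega>
      unfolding h_def e_def Fu by (simp add: exp_cnj inner_minus_left)
    then have "(\<integral>\<omega>. h t x \<omega> \<partial>lborel) = (\<integral>\<omega>. cnj (h t x \<omega>) \<partial>lborel)"
      using integral_reflect[of "h t x"] hm by simp
    also have "\<dots> = cnj (\<integral>\<omega>. h t x \<omega> \<partial>lborel)" by simp
    finally have "Im (\<integral>\<omega>. h t x \<omega> \<partial>lborel) = Im (cnj (\<integral>\<omega>. h t x \<omega> \<partial>lborel))" by simp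
    then show ?thesis by simp
  qed
  define a0 where "a0 = (\<delta> / 2) powr (2 * \<alpha>)"
  define b0 where "b0 = \<delta> powr (2 * \<alpha>)"
  have ab: "0 < a0" "a0 < b0" unfolding a0_def b0_def using \<delta> a by (auto intro: powr_less_mono2)
  define V where "V = measure lborel (ball (0::'a) (\<delta> / 2))"
  have V: "V > 0"
  proof -
    have "emeasure lborel (ball (0::'a) (\<delta> / 2)) = ennreal (unit_ball_vol (real DIM('a)) * (\<delta> / 2) ^ DIM('a))"
      using \<delta> by (intro emeasure_ball) auto
    then have "V = unit_ball_vol (real DIM('a)) * (\<delta> / 2) ^ DIM('a)"
      unfolding V_def measure_def using \<delta> unit_ball_vol_pos[of "real DIM('a)"] by simp
    then show ?thesis using \<delta> unit_ball_vol_pos[of "real DIM('a)"] by simp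
  qed
  define C1 where "C1 = (\<integral>\<omega>. e 1 \<omega> \<partial>lborel)"
  define g where "g t \<omega> = A / 2 * exp (- t * a0) * indicator (ball (0::'a) (\<delta> / 2)) \<omega> - M * exp (- (t - 1) * b0) * e 1 \<omega>" for t \<omega>
  have gle: "g t \<omega> \<le> Re (h t x \<omega>)" if t: "t \<ge> 1" and x: "norm x \<le> R" for t x \<omega>
  proof -
    have Reh: "Re (h t x \<omega>) = e t \<omega> * Re (F \<omega> * exp (\<i> * complex_of_real (\<omega> \<bullet> x)))"
      unfolding h_def mult.assoc by simp
    have e0: "e s \<omega> > 0" for s unfolding e_def by simp
    have tail: "M * exp (- (t - 1) * b0) * e 1 \<omega> \<ge> 0" using M e0[of 1] by simp
    consider "norm \<omega> < \<delta> / 2" | "\<delta> / 2 \<le> norm \<omega> \<and> norm \<omega> \<le> \<delta>" | "norm \<omega> > \<delta>" by linarith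
    then show ?thesis
    proof cases
      case 1
      have "norm \<omega> powr (2 * \<alpha>) \<le> a0" unfolding a0_def using 1 a by (intro powr_mono2) auto
      then have "exp (- t * a0) \<le> e t \<omega>" unfolding e_def using t by (intro exp_mono) (simp add: mult_left_mono)
      then have "A / 2 * exp (- t * a0) \<le> e t \<omega> * (A / 2)" using A by simp
      also have "\<dots> \<le> e t \<omega> * Re (F \<omega> * exp (\<i> * complex_of_real (\<omega> \<bullet> x)))"
        using near[of \<omega> x] 1 x \<delta> e0[of t] by (intro mult_left_mono) auto
      finally have L: "A / 2 * exp (- t * a0) \<le> e t \<omega> * Re (F \<omega> * exp (\<i> * complex_of_real (\<omega> \<bullet> x)))" .
      have gi: "g t \<omega> = A / 2 * exp (- t * a0) - M * exp (- (t - 1) * b0) * e 1 \<omega>"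
        unfolding g_def using 1 by (simp add: indicator_def)
      show ?thesis unfolding Reh gi using L tail by linarith
    next
      case 2
      have "0 \<le> e t \<omega> * Re (F \<omega> * exp (\<i> * complex_of_real (\<omega> \<bullet> x)))"
        using near[of \<omega> x] 2 x A e0[of t] by (intro mult_nonneg_nonneg) auto
      moreover have gi: "g t \<omega> = - (M * exp (- (t - 1) * b0) * e 1 \<omega>)"
        unfolding g_def using 2 by (simp add: indicator_def)
      ultimately show ?thesis unfolding Reh using tail by linarith
    next
      case 3
      have s: "norm \<omega> powr (2 * \<alpha>) \<ge> b0" unfolding b0_def using 3 a \<delta> by (intro powr_mono2) auto
      have "e t \<omega> \<le> exp (- (t - 1) * b0) * e 1 \<omega>"
      proof -
        have "- t * norm \<omega> powr (2 * \<alpha>) \<le> - (t - 1) * b0 + - 1 * norm \<omega> powr (2 * \<alpha>)"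
        proof -
          have m: "(t - 1) * b0 \<le> (t - 1) * norm \<omega> powr (2 * \<alpha>)" using s t by (intro mult_left_mono) auto
          then show ?thesis by (simp add: algebra_simps)
        qed
        then show ?thesis unfolding e_def by (simp add: exp_add[symmetric])
      qed
      then have "M * exp (- (t - 1) * b0) * e 1 \<omega> \<ge> M * e t \<omega>" using M by (simp add: mult_left_mono mult.assoc)
      moreover have "e t \<omega> * Re (F \<omega> * exp (\<i> * complex_of_real (\<omega> \<bullet> x))) \<ge> e t \<omega> * (- M)"
        using far[of \<omega> x] e0[of t] by (intro mult_left_mono) auto
      moreover have gi: "g t \<omega> = - (M * exp (- (t - 1) * b0) * e 1 \<omega>)"
        unfolding g_def using 3 \<delta> by (simp add: indicator_def)
      moreover have "e t \<omega> * (- M) = - (M * e t \<omega>)" by simp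
      ultimately show ?thesis unfolding Reh by linarith
    qed
  qed
  have fin: "emeasure lborel (ball (0::'a) (\<delta> / 2)) < \<infinity>" by (rule emeasure_lborel_ball_finite)
  have gint: "integrable lborel (g t)" for t
    unfolding g_def using eint[of 1]
    by (intro Bochner_Integration.integrable_diff integrable_mult_right integrable_real_indicator) (use fin in auto)
  have gI: "(\<integral>\<omega>. g t \<omega> \<partial>lborel) = A / 2 * exp (- t * a0) * V - M * exp (- (t - 1) * b0) * C1" for t
    unfolding g_def V_def C1_def using eint[of 1]
    by (subst Bochner_Integration.integral_diff) (use fin in \<open>auto intro!: integrable_real_indicator\<close>)
  define Q where "Q = 2 * M * C1 * exp b0 / (A * V)"
  define T where "T = max 1 (ln (\<bar>Q\<bar> + 1) / (b0 - a0))"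
  show "\<exists>T\<ge>0. \<forall>t\<ge>T. \<forall>x\<in>K. Im (frac_heat_sol \<alpha> u0 t x) = 0 \<and> Re (frac_heat_sol \<alpha> u0 t x) > 0"
  proof (intro exI[of _ T] conjI allI impI ballI)
    show "T \<ge> 0" unfolding T_def by simp
    fix t x assume t: "T \<le> t" and xK: "x \<in> K"
    have t1: "t \<ge> 1" using t unfolding T_def by simp
    have xR: "norm x \<le> R" using R xK by simp
    show "Im (frac_heat_sol \<alpha> u0 t x) = 0" unfolding sol using him by simp
    have "ln (\<bar>Q\<bar> + 1) / (b0 - a0) \<le> t" using t unfolding T_def by linarith
    then have "ln (\<bar>Q\<bar> + 1) \<le> t * (b0 - a0)"
      using ab by (simp add: pos_divide_le_eq)
    then have "exp (ln (\<bar>Q\<bar> + 1)) \<le> exp (t * (b0 - a0))" by (rule exp_mono)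
    moreover have "exp (ln (\<bar>Q\<bar> + 1)) = \<bar>Q\<bar> + 1" by (intro exp_ln) linarith
    ultimately have "\<bar>Q\<bar> + 1 \<le> exp (t * (b0 - a0))" by simp
    then have Qlt: "Q < exp (t * (b0 - a0))" by linarith
    have key: "M * exp (- (t - 1) * b0) * C1 < A / 2 * exp (- t * a0) * V"
    proof -
      have "M * C1 * exp b0 = Q * (A * V / 2)" unfolding Q_def using A V by (simp add: field_simps)
      also have "\<dots> < exp (t * (b0 - a0)) * (A * V / 2)" using Qlt A V by (intro mult_strict_right_mono) auto
      finally have "M * C1 * exp b0 * exp (- t * b0) < exp (t * (b0 - a0)) * (A * V / 2) * exp (- t * b0)"
        by (intro mult_strict_right_mono) auto
      also have "exp (t * (b0 - a0)) * (A * V / 2) * exp (- t * b0) = A / 2 * exp (- t * a0) * V"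
        by (simp add: algebra_simps exp_add[symmetric])
      also have "M * C1 * exp b0 * exp (- t * b0) = M * exp (- (t - 1) * b0) * C1"
        by (simp add: algebra_simps exp_add[symmetric])
      finally show ?thesis .
    qed
    have "0 < (\<integral>\<omega>. g t \<omega> \<partial>lborel)" unfolding gI using key by simp
    also have "\<dots> \<le> (\<integral>\<omega>. Re (h t x \<omega>) \<partial>lborel)"
      using gint hint[of t x] t1 gle[OF t1 xR] by (intro integral_mono) auto
    also have "\<dots> = Re (\<integral>\<omega>. h t x \<omega> \<partial>lborel)" using hint[of t x] t1 by (intro integral_Re) auto
    finally have "0 < Re (\<integral>\<omega>. h t x \<omega> \<partial>lborel)" .
    then show "Re (frac_heat_sol \<alpha> u0 t x) > 0" unfolding sol using c0 by simp
  qed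
qed

end
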